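(* For every Bayesian network $(X_v)_{v\in V}$ on a finite DAG $\mathcal G$ with states $\mathcal A$ and full support, and every surjection $f:\mathcal A\to\mathcal B$, we have (D3) $\Rightarrow$ (D2) $\Rightarrow$ (D1). Moreover, neither implication can be reversed in general: there exist a DAG, a BN with full support and a surjection $f$ for which (D1) holds but (D2) fails, and there exist a DAG, a BN with full support and a surjection $f$ for which (D2) holds but (D3) fails.
   Context: $\mathcal G=(V,E)$ is a finite directed acyclic graph; $pa(v)$ is the set of parents of $v$, $nd(v)$ the set of non-descendants (vertices other than $v$ not reachable from $v$ by a directed path), $V_s=\{v:pa(v)=\emptyset\}$ the source nodes, $V_p=V\setminus V_s$. $\mathcal A,\mathcal B$ are finite sets with $|\mathcal A|>|\mathcal B|$ and $f:\mathcal A\to\mathcal B$ a surjection, applied coordinatewise to tuples. A Bayesian network (BN) on $\mathcal G$ with states $\mathcal A$ is specified by a distribution $\alpha_v$ on $\mathcal A$ for each $v\in V_s$ (the initial distribution) and, for each $v\in V_p$ and $a_{pa(v)}\in\mathcal A^{pa(v)}$, a distribution $P_v(\cdot\mid a_{pa(v)})$ on $\mathcal A$ (the CPDs); the random vector $(X_v)_{v\in V}$ has $\mathbb P(X=x)=\prod_{v\in V_s}\alpha_v(x_v)\prod_{v\in V_p}P_v(x_v\mid x_{pa(v)})$. Full support means every $x\in\mathcal A^V$ has positive probability. For an initial distribution $\tilde\alpha=(\tilde\alpha_v)_{v\in V_s}$, $X[\tilde\alpha]$ is the random vector obtained by replacing $\alpha$ by $\tilde\alpha$ and keeping all CPDs,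 with law $\mathbb P_{\tilde\alpha}$. $U_v=f(X_v)$, $U[\tilde\alpha]=f(X[\tilde\alpha])$. A random vector $(Y_v)_{v\in V}$ with finitely many values factorises over $\mathcal G$ if $\mathbb P(Y=y)=\prod_v q_v(y_v\mid y_{pa(v)})$ for some conditional distributions $q_v$ (equivalently $Y_v$ is conditionally independent of $Y_{nd(v)\setminus pa(v)}$ given $Y_{pa(v)}$ for all $v$). Conditions: (D1) $(U_v)_{v\in V}$ factorises over $\mathcal G$. (D2) for every initial distribution $\tilde\alpha$, $U[\tilde\alpha]$ factorises over $\mathcal G$. (D3) for every $\tilde\alpha$, $U[\tilde\alpha]$ factorises over $\mathcal G$, and for every $v\in V_p$, $b_v\in\mathcal B$, $b_{pa(v)}\in\mathcal B^{pa(v)}$, the value $\mathbb P_{\tilde\alpha}(U_v=b_v\mid U_{pa(v)}=b_{pa(v)})$ is the same for all $\tilde\alpha$ with $\mathbb P_{\tilde\alpha}(U_{pa(v)}=b_{pa(v)})>0$. *)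

theory Defs
  imports Complex_Main "HOL-Library.FuncSet"
begin

definition dag :: "'v set \<Rightarrow> ('v \<Rightarrow> 'v set) \<Rightarrow> bool" where
  "dag V pa \<longleftrightarrow> finite V \<and> (\<forall>v\<in>V. pa v \<subseteq> V)
      \<and> acyclic {(u, v). v \<in> V \<and> u \<in> pa v}"

definition distr_on :: "'s set \<Rightarrow> ('s \<Rightarrow> real) \<Rightarrow> bool" where
  "distr_on S p \<longleftrightarrow> (\<forall>s\<in>S. 0 \<le> p s) \<and> sum p S = 1"

definition init_dist :: "'v set \<Rightarrow> ('v \<Rightarrow> 'v set) \<Rightarrow> 'a set \<Rightarrow> ('v \<Rightarrow> 'a \<Rightarrow> real) \<Rightarrow> bool" where
  "init_dist V pa A \<alpha> \<longleftrightarrow> (\<forall>v\<in>V. pa v = {} \<longrightarrow> distr_on A (\<alpha> v))"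

definition cpds :: "'v set \<Rightarrow> ('v \<Rightarrow> 'v set) \<Rightarrow> 'a set \<Rightarrow> ('v \<Rightarrow> ('v \<Rightarrow> 'a) \<Rightarrow> 'a \<Rightarrow> real) \<Rightarrow> bool" where
  "cpds V pa A P \<longleftrightarrow> (\<forall>v\<in>V. pa v \<noteq> {} \<longrightarrow> (\<forall>xp \<in> pa v \<rightarrow>\<^sub>E A. distr_on A (P v xp)))"

definition is_BN :: "'v set \<Rightarrow> ('v \<Rightarrow> 'v set) \<Rightarrow> 'a set \<Rightarrow> ('v \<Rightarrow> 'a \<Rightarrow> real)
     \<Rightarrow> ('v \<Rightarrow> ('v \<Rightarrow> 'a) \<Rightarrow> 'a \<Rightarrow> real) \<Rightarrow> bool" where
  "is_BN V pa A \<alpha> P \<longleftrightarrow> dag V pa \<and> finite A \<and> init_dist V pa A \<alpha> \<and> cpds V pa A P"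

definition bn_prob :: "'v set \<Rightarrow> ('v \<Rightarrow> 'v set) \<Rightarrow> ('v \<Rightarrow> 'a \<Rightarrow> real)
     \<Rightarrow> ('v \<Rightarrow> ('v \<Rightarrow> 'a) \<Rightarrow> 'a \<Rightarrow> real) \<Rightarrow> ('v \<Rightarrow> 'a) \<Rightarrow> real" where
  "bn_prob V pa \<alpha> P x =
     (\<Prod>v\<in>V. if pa v = {} then \<alpha> v (x v) else P v (restrict x (pa v)) (x v))"

definition full_support :: "'v set \<Rightarrow> ('v \<Rightarrow> 'v set) \<Rightarrow> 'a set \<Rightarrow> ('v \<Rightarrow> 'a \<Rightarrow> real)
     \<Rightarrow> ('v \<Rightarrow> ('v \<Rightarrow> 'a) \<Rightarrow> 'a \<Rightarrow> real) \<Rightarrow> bool" where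
  "full_support V pa A \<alpha> P \<longleftrightarrow> (\<forall>x \<in> V \<rightarrow>\<^sub>E A. 0 < bn_prob V pa \<alpha> P x)"

text \<open>Probability that U_w = c w for all w in W, where U = f(X).\<close>
definition uprob :: "'v set \<Rightarrow> ('v \<Rightarrow> 'v set) \<Rightarrow> 'a set \<Rightarrow> ('a \<Rightarrow> 'b) \<Rightarrow> ('v \<Rightarrow> 'a \<Rightarrow> real)
     \<Rightarrow> ('v \<Rightarrow> ('v \<Rightarrow> 'a) \<Rightarrow> 'a \<Rightarrow> real) \<Rightarrow> 'v set \<Rightarrow> ('v \<Rightarrow> 'b) \<Rightarrow> real" where
  "uprob V pa A f \<alpha> P W c =
     (\<Sum>x \<in> {x \<in> V \<rightarrow>\<^sub>E A. \<forall>w\<in>W. f (x w) = c w}. bn_prob V pa \<alpha> P x)"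

definition ulaw :: "'v set \<Rightarrow> ('v \<Rightarrow> 'v set) \<Rightarrow> 'a set \<Rightarrow> ('a \<Rightarrow> 'b) \<Rightarrow> ('v \<Rightarrow> 'a \<Rightarrow> real)
     \<Rightarrow> ('v \<Rightarrow> ('v \<Rightarrow> 'a) \<Rightarrow> 'a \<Rightarrow> real) \<Rightarrow> ('v \<Rightarrow> 'b) \<Rightarrow> real" where
  "ulaw V pa A f \<alpha> P u = uprob V pa A f \<alpha> P V u"

definition factorises :: "'v set \<Rightarrow> ('v \<Rightarrow> 'v set) \<Rightarrow> 's set \<Rightarrow> (('v \<Rightarrow> 's) \<Rightarrow> real) \<Rightarrow> bool" where
  "factorises V pa S Q \<longleftrightarrow>
     (\<exists>q :: 'v \<Rightarrow> ('v \<Rightarrow> 's) \<Rightarrow> 's \<Rightarrow> real.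
        (\<forall>v\<in>V. \<forall>yp \<in> pa v \<rightarrow>\<^sub>E S. distr_on S (q v yp)) \<and>
        (\<forall>y \<in> V \<rightarrow>\<^sub>E S. Q y = (\<Prod>v\<in>V. q v (restrict y (pa v)) (y v))))"

definition D1 where
  "D1 V pa A B f \<alpha> P \<longleftrightarrow> factorises V pa B (ulaw V pa A f \<alpha> P)"

definition D2 where
  "D2 V pa A B f P \<longleftrightarrow>
     (\<forall>\<alpha>'. init_dist V pa A \<alpha>' \<longrightarrow> factorises V pa B (ulaw V pa A f \<alpha>' P))"

definition D3 where
  "D3 V pa A B f P \<longleftrightarrow> D2 V pa A B f P \<and>
     (\<forall>v\<in>V. pa v \<noteq> {} \<longrightarrow> (\<forall>b\<in>B. \<forall>c \<in> pa v \<rightarrow>\<^sub>E B. \<forall>\<alpha>1 \<alpha>2.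
        init_dist V pa A \<alpha>1 \<longrightarrow> init_dist V pa A \<alpha>2 \<longrightarrow>
        0 < uprob V pa A f \<alpha>1 P (pa v) c \<longrightarrow> 0 < uprob V pa A f \<alpha>2 P (pa v) c \<longrightarrow>
        uprob V pa A f \<alpha>1 P (insert v (pa v)) (c(v := b)) / uprob V pa A f \<alpha>1 P (pa v) c
        = uprob V pa A f \<alpha>2 P (insert v (pa v)) (c(v := b)) / uprob V pa A f \<alpha>2 P (pa v) c))"

definition setting where
  "setting V pa A B f \<alpha> P \<longleftrightarrow> is_BN V pa A \<alpha> P \<and> full_support V pa A \<alpha> P
     \<and> finite B \<and> card B < card A \<and> f ` A = B"

end

theory Submission
  imports Defs
begin

definition mk3 :: "'a \<Rightarrow> 'a \<Rightarrow> 'a \<Rightarrow> nat \<Rightarrow> 'a" where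
  "mk3 a b d = (\<lambda>i. if i = 0 then a else if i = 1 then b else if i = 2 then d else undefined)"
definition mk2 :: "'a \<Rightarrow> 'a \<Rightarrow> nat \<Rightarrow> 'a" where
  "mk2 a b = (\<lambda>i. if i = 0 then a else if i = 1 then b else undefined)"

lemma mk3_simps[simp]: "mk3 a b d 0 = a" "mk3 a b d 1 = b" "mk3 a b d (Suc 0) = b" "mk3 a b d 2 = d"
  by (auto simp: mk3_def)
lemma mk2_simps[simp]: "mk2 a b 0 = a" "mk2 a b 1 = b" "mk2 a b (Suc 0) = b"
  by (auto simp: mk2_def)

lemma PiE3:
  assumes "finite (S 0)" "finite (S 1)" "finite (S 2)"
  shows "(\<Sum>x\<in>PiE {0,1,2::nat} S. F x) = (\<Sum>a\<in>S 0. \<Sum>b\<in>S 1. \<Sum>d\<in>S 2. F (mk3 a b d))"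
proof -
  have bij: "bij_betw (\<lambda>(a,b,d). mk3 a b d) (S 0 \<times> S 1 \<times> S 2) (PiE {0,1,2} S)"
  proof (rule bij_betwI[where g="\<lambda>x. (x 0, x 1, x 2)"])
    show "(\<lambda>(a,b,d). mk3 a b d) \<in> S 0 \<times> S 1 \<times> S 2 \<rightarrow> PiE {0,1,2} S"
      by (auto simp: mk3_def PiE_def extensional_def)
    show "(\<lambda>x. (x 0, x 1, x 2)) \<in> PiE {0,1,2} S \<rightarrow> S 0 \<times> S 1 \<times> S 2" by auto
    show "\<And>x. x \<in> S 0 \<times> S 1 \<times> S 2 \<Longrightarrow> (case (case x of (a, b, d) \<Rightarrow> mk3 a b d) of x \<Rightarrow> (x 0, x 1, x 2)) = x"
      by auto
    show "\<And>y. y \<in> PiE {0,1,2} S \<Longrightarrow> (case (y 0, y 1, y 2) of (a, b, d) \<Rightarrow> mk3 a b d) = y"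
      by (auto simp: mk3_def PiE_def extensional_def)
  qed
  have "(\<Sum>x\<in>PiE {0,1,2::nat} S. F x) = (\<Sum>x\<in>S 0 \<times> S 1 \<times> S 2. F ((\<lambda>(a,b,d). mk3 a b d) x))"
    using sum.reindex_bij_betw[OF bij, of F] by simp
  also have "\<dots> = (\<Sum>a\<in>S 0. \<Sum>b\<in>S 1. \<Sum>d\<in>S 2. F (mk3 a b d))"
    by (simp add: sum.cartesian_product split_def)
  finally show ?thesis .
qed

lemma PiE2:
  assumes "finite (S 0)" "finite (S 1)"
  shows "(\<Sum>x\<in>PiE {0,1::nat} S. F x) = (\<Sum>a\<in>S 0. \<Sum>b\<in>S 1. F (mk2 a b))"
proof -
  have bij: "bij_betw (\<lambda>(a,b). mk2 a b) (S 0 \<times> S 1) (PiE {0,1} S)"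
  proof (rule bij_betwI[where g="\<lambda>x. (x 0, x 1)"])
    show "(\<lambda>(a,b). mk2 a b) \<in> S 0 \<times> S 1 \<rightarrow> PiE {0,1} S"
      by (auto simp: mk2_def PiE_def extensional_def)
    show "(\<lambda>x. (x 0, x 1)) \<in> PiE {0,1} S \<rightarrow> S 0 \<times> S 1" by auto
    show "\<And>x. x \<in> S 0 \<times> S 1 \<Longrightarrow> (case (case x of (a, b) \<Rightarrow> mk2 a b) of x \<Rightarrow> (x 0, x 1)) = x"
      by auto
    show "\<And>y. y \<in> PiE {0,1} S \<Longrightarrow> (case (y 0, y 1) of (a, b) \<Rightarrow> mk2 a b) = y"
      by (auto simp: mk2_def PiE_def extensional_def)
  qed
  have "(\<Sum>x\<in>PiE {0,1::nat} S. F x) = (\<Sum>x\<in>S 0 \<times> S 1. F ((\<lambda>(a,b). mk2 a b) x))"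
    using sum.reindex_bij_betw[OF bij, of F] by simp
  also have "\<dots> = (\<Sum>a\<in>S 0. \<Sum>b\<in>S 1. F (mk2 a b))"
    by (simp add: sum.cartesian_product split_def)
  finally show ?thesis .
qed

lemma filt_PiE:
  assumes "W \<subseteq> V"
  shows "{x \<in> V \<rightarrow>\<^sub>E A. \<forall>w\<in>W. f (x w) = c w} = PiE V (\<lambda>w. if w \<in> W then {a\<in>A. f a = c w} else A)"
  using assms by (auto simp: PiE_def Pi_def split: if_splits)

lemma uprob3:
  assumes "W \<subseteq> {0,1,2::nat}" "finite A"
  shows "uprob {0,1,2} pa A f \<alpha> P W c =
    (\<Sum>a\<in>A. \<Sum>b\<in>A. \<Sum>d\<in>A. (if 0 \<in> W \<longrightarrow> f a = c 0 then 1 else 0) *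
       (if 1 \<in> W \<longrightarrow> f b = c 1 then 1 else 0) * (if 2 \<in> W \<longrightarrow> f d = c 2 then 1 else 0) *
        bn_prob {0,1,2} pa \<alpha> P (mk3 a b d))"
  unfolding uprob_def filt_PiE[OF assms(1)]
  apply (subst PiE3)
  using assms(2) apply (auto simp: sum.inter_filter sum_distrib_left sum_distrib_right intro!: sum.cong)
  done

lemma uprob2:
  assumes "W \<subseteq> {0,1::nat}" "finite A"
  shows "uprob {0,1} pa A f \<alpha> P W c =
    (\<Sum>a\<in>A. \<Sum>b\<in>A. (if 0 \<in> W \<longrightarrow> f a = c 0 then 1 else 0) *
       (if 1 \<in> W \<longrightarrow> f b = c 1 then 1 else 0) * bn_prob {0,1} pa \<alpha> P (mk2 a b))"
  unfolding uprob_def filt_PiE[OF assms(1)]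
  apply (subst PiE2)
  using assms(2) apply (auto simp: sum.inter_filter intro!: sum.cong)
  done

definition "paB = (\<lambda>v::nat. if v = 1 then {0::nat} else {})"
definition "fB = (\<lambda>a::nat. if a = 2 then 1 else (0::nat))"
definition "TB = (\<lambda>x a::nat. if x = 0 then (if a = 0 then 1/2 else 1/4) else (if a = 2 then 3/4 else (1/8::real)))"
definition "PB = (\<lambda>(v::nat) (xp::nat\<Rightarrow>nat) a. TB (xp 0) a)"
definition "\<alpha>B = (\<lambda>(v::nat) (a::nat). (1/3::real))"

lemma bnB: "bn_prob {0,1} paB \<alpha> PB (mk2 a b) = \<alpha> 0 a * TB a b"
  by (simp add: bn_prob_def paB_def PB_def)
lemma bnB': "bn_prob {0,Suc 0} paB \<alpha> PB (mk2 a b) = \<alpha> 0 a * TB a b"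
  using bnB by simp

lemma dagB: "dag {0,1} paB"
proof -
  have "{(u, v). v \<in> {0,1::nat} \<and> u \<in> paB v} \<subseteq> {(u,v). u < v}" by (auto simp: paB_def)
  moreover have "acyclic {(u::nat,v). u < v}" by (rule wf_acyclic) (rule wf_less)
  ultimately have "acyclic {(u, v). v \<in> {0,1::nat} \<and> u \<in> paB v}" by (rule acyclic_subset[rotated])
  then show ?thesis unfolding dag_def by (intro conjI) (auto simp: paB_def)
qed

lemma settingB: "setting {0,1} paB {0,1,2} {0,1} fB \<alpha>B PB"
  unfolding setting_def is_BN_def
  apply (intro conjI) apply (rule dagB)
  by (auto simp: init_dist_def cpds_def distr_on_def \<alpha>B_def PB_def TB_def full_support_def
      bn_prob_def paB_def fB_def intro!: prod_pos)

lemma D2B: "D2 {0,1} paB {0,1,2} {0,1} fB PB"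
  unfolding D2_def
proof (intro allI impI)
  fix \<alpha>' :: "nat \<Rightarrow> nat \<Rightarrow> real"
  assume "init_dist {0,1} paB {0,1,2} \<alpha>'"
  hence d: "distr_on {0,1,2} (\<alpha>' 0)" by (simp add: init_dist_def paB_def)
  define p0 p1 p2 where "p0 = \<alpha>' 0 0" and "p1 = \<alpha>' 0 1" and "p2 = \<alpha>' 0 2"
  have p: "p0 \<ge> 0" "p1 \<ge> 0" "p2 \<ge> 0" "p0 + p1 + p2 = 1"
    using d by (auto simp: distr_on_def p0_def p1_def p2_def)
  have U: "ulaw {0,1} paB {0,1,2} fB \<alpha>' PB y =
     (if y 0 = 0 then (if y 1 = 0 then p0 * 3/4 + p1 * 1/4 else p0 * 1/4 + p1 * 3/4)
      else (if y 1 = 0 then p2 / 4 else p2 * 3 / 4))" if "y 0 \<in> {0,1}" "y 1 \<in> {0,1}" for y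
    using that unfolding ulaw_def
    by (subst uprob2) (auto simp: bnB bnB' fB_def TB_def p0_def p1_def p2_def)
  define q where "q = (\<lambda>(v::nat) (yp::nat\<Rightarrow>nat) (b::nat).
     if v = 0 then (if b = 0 then p0 + p1 else p2)
     else if yp 0 = 0 then (if p0 + p1 = 0 then (if b = 0 then 1 else 0) else
          (if b = 0 then p0 * 3/4 + p1 * 1/4 else p0 * 1/4 + p1 * 3/4) / (p0 + p1))
     else (if b = 0 then 1/4 else 3/4))"
  show "factorises {0,1} paB {0,1} (ulaw {0,1} paB {0,1,2} fB \<alpha>' PB)"
    unfolding factorises_def
  proof (intro exI[of _ q] conjI ballI)
    fix v yp assume "v \<in> {0::nat,1}" "yp \<in> paB v \<rightarrow>\<^sub>E {0::nat,1}"
    then show "distr_on {0,1} (q v yp)"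
      using p by (auto simp: q_def distr_on_def paB_def add_divide_distrib[symmetric])
  next
    fix y assume y: "y \<in> {0::nat,1} \<rightarrow>\<^sub>E {0::nat,1}"
    hence y01: "y 0 \<in> {0,1}" "y 1 \<in> {0,1}" by auto
    have z: "p0 = 0" "p1 = 0" if "p0 + p1 = 0" using p that by auto
    show "ulaw {0,1} paB {0,1,2} fB \<alpha>' PB y = (\<Prod>v\<in>{0,1}. q v (restrict y (paB v)) (y v))"
      unfolding U[OF y01(1) y01(2)] using y01 z by (auto simp: q_def paB_def)
  qed
qed

lemma notD3B: "\<not> D3 {0,1} paB {0,1,2} {0,1} fB PB"
proof
  assume "D3 {0,1} paB {0,1,2} {0,1} fB PB"
  hence A: "\<forall>v\<in>{0,1}. paB v \<noteq> {} \<longrightarrow> (\<forall>b\<in>{0,1}. \<forall>c \<in> paB v \<rightarrow>\<^sub>E {0,1}. \<forall>\<alpha>1 \<alpha>2.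
        init_dist {0,1} paB {0,1,2} \<alpha>1 \<longrightarrow> init_dist {0,1} paB {0,1,2} \<alpha>2 \<longrightarrow>
        0 < uprob {0,1} paB {0,1,2} fB \<alpha>1 PB (paB v) c \<longrightarrow> 0 < uprob {0,1} paB {0,1,2} fB \<alpha>2 PB (paB v) c \<longrightarrow>
        uprob {0,1} paB {0,1,2} fB \<alpha>1 PB (insert v (paB v)) (c(v := b)) / uprob {0,1} paB {0,1,2} fB \<alpha>1 PB (paB v) c
        = uprob {0,1} paB {0,1,2} fB \<alpha>2 PB (insert v (paB v)) (c(v := b)) / uprob {0,1} paB {0,1,2} fB \<alpha>2 PB (paB v) c)"
    unfolding D3_def by blast
  have pa1: "paB 1 = {0}" by (simp add: paB_def)
  define c :: "nat \<Rightarrow> nat" where "c = (\<lambda>i. if i = 0 then 0 else undefined)"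
  define a1 :: "nat \<Rightarrow> nat \<Rightarrow> real" where "a1 = (\<lambda>v a. if a = 0 then 1 else 0)"
  define a2 :: "nat \<Rightarrow> nat \<Rightarrow> real" where "a2 = (\<lambda>v a. if a = 1 then 1 else 0)"
  have c: "c \<in> paB 1 \<rightarrow>\<^sub>E {0,1}" unfolding pa1 by (auto simp: c_def split: if_splits)
  have i1: "init_dist {0,1} paB {0,1,2} a1" by (simp add: init_dist_def distr_on_def a1_def)
  have i2: "init_dist {0,1} paB {0,1,2} a2" by (simp add: init_dist_def distr_on_def a2_def)
  have e1: "uprob {0,1} paB {0,1,2} fB a1 PB (paB 1) c = 1"
    unfolding pa1 by (subst uprob2) (auto simp: bnB bnB' a1_def c_def fB_def TB_def)
  have e2: "uprob {0,1} paB {0,1,2} fB a2 PB (paB 1) c = 1"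
    unfolding pa1 by (subst uprob2) (auto simp: bnB bnB' a2_def c_def fB_def TB_def)
  have e3: "uprob {0,1} paB {0,1,2} fB a1 PB (insert 1 (paB 1)) (c(1:=0)) = 3/4"
    unfolding pa1 by (subst uprob2) (auto simp: bnB bnB' a1_def c_def fB_def TB_def)
  have e4: "uprob {0,1} paB {0,1,2} fB a2 PB (insert 1 (paB 1)) (c(1:=0)) = 1/4"
    unfolding pa1 by (subst uprob2) (auto simp: bnB bnB' a2_def c_def fB_def TB_def)
  have "(1::nat) \<in> {0,1}" "paB 1 \<noteq> {}" "(0::nat) \<in> {0,1}" by (auto simp: paB_def)
  note X = A[rule_format, OF this c i1 i2, unfolded e1 e2 e3 e4]
  show False using X by simp
qed

definition "paA = (\<lambda>v::nat. if v = 1 then {0::nat} else if v = 2 then {1} else {})"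
definition "T1 = (\<lambda>x a::nat. if x = 0 then (if a = 0 then 1/2 else 1/4) else if x = 1 then (if a = 1 then 1/2 else 1/4) else (1/3::real))"
definition "T2 = (\<lambda>x a::nat. if x = 0 then (if a = 0 then 1/2 else 1/4) else if x = 1 then (if a = 2 then 3/4 else 1/8) else (1/3::real))"
definition "PA = (\<lambda>(v::nat) (xp::nat\<Rightarrow>nat) a. if v = 1 then T1 (xp 0) a else T2 (xp 1) a)"

lemma bnA: "bn_prob {0,1,2} paA \<alpha> PA (mk3 a b d) = \<alpha> 0 a * T1 a b * T2 b d"
  by (simp add: bn_prob_def paA_def PA_def)
lemma bnA': "bn_prob {0,Suc 0,2} paA \<alpha> PA (mk3 a b d) = \<alpha> 0 a * T1 a b * T2 b d"
  using bnA by simp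

lemma dagA: "dag {0,1,2} paA"
proof -
  have "{(u, v). v \<in> {0,1,2::nat} \<and> u \<in> paA v} \<subseteq> {(u,v). u < v}" by (auto simp: paA_def)
  moreover have "acyclic {(u::nat,v). u < v}" by (rule wf_acyclic) (rule wf_less)
  ultimately have "acyclic {(u, v). v \<in> {0,1,2::nat} \<and> u \<in> paA v}" by (rule acyclic_subset[rotated])
  then show ?thesis unfolding dag_def by (intro conjI) (auto simp: paA_def)
qed

lemma settingA: "setting {0,1,2} paA {0,1,2} {0,1} fB \<alpha>B PA"
  unfolding setting_def is_BN_def
  apply (intro conjI) apply (rule dagA)
  by (auto simp: init_dist_def cpds_def distr_on_def \<alpha>B_def PA_def T1_def T2_def full_support_def
      bn_prob_def paA_def fB_def intro!: prod_pos)

lemma UA: "ulaw {0,1,2} paA {0,1,2} fB \<alpha> PA y =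
  (\<Sum>a\<in>{0,1,2}. \<Sum>b\<in>{0,1,2}. \<Sum>d\<in>{0,1,2}. (if fB a = y 0 then 1 else 0) *
       (if fB b = y 1 then 1 else 0) * (if fB d = y 2 then 1 else 0) * (\<alpha> 0 a * T1 a b * T2 b d))"
  unfolding ulaw_def by (subst uprob3) (simp_all only: bnA, auto)

lemma D1A: "D1 {0,1,2} paA {0,1,2} {0,1} fB \<alpha>B PA"
proof -
  define q where "q = (\<lambda>(v::nat) (yp::nat\<Rightarrow>nat) (b::nat).
     if v = 0 then (if b = 0 then 2/3 else 1/3::real)
     else if v = 1 then (if yp 0 = 0 then (if b = 0 then 3/4 else 1/4) else (if b = 0 then 2/3 else 1/3))
     else (if yp 1 = 0 then 1/2 else (if b = 0 then 2/3 else 1/3)))"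
  show ?thesis
  unfolding D1_def factorises_def
  proof (intro exI[of _ q] conjI ballI)
    fix v yp assume "v \<in> {0::nat,1,2}" "yp \<in> paA v \<rightarrow>\<^sub>E {0::nat,1}"
    then show "distr_on {0,1} (q v yp)" by (auto simp: q_def distr_on_def)
  next
    fix y assume y: "y \<in> {0::nat,1,2} \<rightarrow>\<^sub>E {0::nat,1}"
    hence y01: "y 0 \<in> {0,1}" "y 1 \<in> {0,1}" "y 2 \<in> {0,1}" by auto
    show "ulaw {0,1,2} paA {0,1,2} fB \<alpha>B PA y = (\<Prod>v\<in>{0,1,2}. q v (restrict y (paA v)) (y v))"
      unfolding UA using y01 apply (simp only: insert_iff singleton_iff empty_iff)
      apply (elim disjE; simp add: q_def paA_def fB_def T1_def T2_def \<alpha>B_def)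
      done
  qed
qed

lemma mk3_in: "a \<in> {0,1} \<Longrightarrow> b \<in> {0,1} \<Longrightarrow> d \<in> {0,1} \<Longrightarrow> mk3 a b d \<in> {0::nat,1,2} \<rightarrow>\<^sub>E {0::nat,1}"
  by (auto simp: mk3_def split: if_splits)

lemma notD2A: "\<not> D2 {0,1,2} paA {0,1,2} {0,1} fB PA"
proof
  assume D: "D2 {0,1,2} paA {0,1,2} {0,1} fB PA"
  define a' :: "nat \<Rightarrow> nat \<Rightarrow> real" where "a' = (\<lambda>v a. if a = 1 then 0 else 1/2)"
  have i: "init_dist {0,1,2} paA {0,1,2} a'" by (simp add: init_dist_def distr_on_def a'_def)
  have "factorises {0,1,2} paA {0,1} (ulaw {0,1,2} paA {0,1,2} fB a' PA)"
    using D i unfolding D2_def by (elim allE impE)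
  then obtain q where q0: "\<forall>y \<in> {0::nat,1,2} \<rightarrow>\<^sub>E {0::nat,1}.
     ulaw {0,1,2} paA {0,1,2} fB a' PA y = (\<Prod>v\<in>{0,1,2}. q v (restrict y (paA v)) (y v))"
    unfolding factorises_def by (elim exE conjE)
  have q: "ulaw {0,1,2} paA {0,1,2} fB a' PA y = (\<Prod>v\<in>{0,1,2}. q v (restrict y (paA v)) (y v))"
    if "y \<in> {0::nat,1,2} \<rightarrow>\<^sub>E {0::nat,1}" for y
    using q0 that by (rule bspec)
  have pa: "paA 0 = {}" "paA 1 = {0}" "paA 2 = {1}" by (auto simp: paA_def)
  have r: "restrict x {} = (\<lambda>_. undefined)" for x :: "nat \<Rightarrow> nat" by (simp add: restrict_def)
  have r0: "restrict (mk3 a b d) {0} = (\<lambda>i. if i = 0 then a else undefined)" for a b d :: nat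
    by (auto simp: restrict_def mk3_def)
  have r1: "restrict (mk3 a b d) {1} = (\<lambda>i. if i = 1 then b else undefined)" for a b d :: nat
    by (auto simp: restrict_def mk3_def)
  have P: "(\<Prod>v\<in>{0,1,2}. q v (restrict (mk3 a b d) (paA v)) (mk3 a b d v)) =
     q 0 (\<lambda>_. undefined) a * q 1 (\<lambda>i. if i = 0 then a else undefined) b * q 2 (\<lambda>i. if i = 1 then b else undefined) d"
    for a b d :: nat
    using pa r1 by (simp add: r r0)
  have Q: "ulaw {0,1,2} paA {0,1,2} fB a' PA (mk3 a b d) =
     q 0 (\<lambda>_. undefined) a * q 1 (\<lambda>i. if i = 0 then a else undefined) b * q 2 (\<lambda>i. if i = 1 then b else undefined) d"
    if "a \<in> {0,1}" "b \<in> {0,1}" "d \<in> {0,1}" for a b d :: nat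
    using q[OF mk3_in[OF that]] P by simp
  have cross: "ulaw {0,1,2} paA {0,1,2} fB a' PA (mk3 0 0 0) * ulaw {0,1,2} paA {0,1,2} fB a' PA (mk3 1 0 1)
      = ulaw {0,1,2} paA {0,1,2} fB a' PA (mk3 0 0 1) * ulaw {0,1,2} paA {0,1,2} fB a' PA (mk3 1 0 0)"
  proof -
    have i0: "(0::nat) \<in> {0,1}" and i1: "(1::nat) \<in> {0,1}" by simp_all
    show ?thesis unfolding Q[OF i0 i0 i0] Q[OF i1 i0 i1] Q[OF i0 i0 i1] Q[OF i1 i0 i0] by (simp add: mult_ac)
  qed
  have v1: "ulaw {0,1,2} paA {0,1,2} fB a' PA (mk3 0 0 0) = 7/32"
    unfolding UA by (simp add: fB_def T1_def T2_def a'_def)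
  have v2: "ulaw {0,1,2} paA {0,1,2} fB a' PA (mk3 0 0 1) = 5/32"
    unfolding UA by (simp add: fB_def T1_def T2_def a'_def)
  have v3: "ulaw {0,1,2} paA {0,1,2} fB a' PA (mk3 1 0 1) = 1/6"
    unfolding UA by (simp add: fB_def T1_def T2_def a'_def)
  have v4: "ulaw {0,1,2} paA {0,1,2} fB a' PA (mk3 1 0 0) = 1/6"
    unfolding UA by (simp add: fB_def T1_def T2_def a'_def)
  show False using cross unfolding v1 v2 v3 v4 by simp
qed


theorem mainTheorem1:
  shows "(\<forall>(V :: 'v set) pa (A :: 'a set) (B :: 'b set) f \<alpha> P.
            setting V pa A B f \<alpha> P \<longrightarrow>
              (D3 V pa A B f P \<longrightarrow> D2 V pa A B f P) \<and> (D2 V pa A B f P \<longrightarrow> D1 V pa A B f \<alpha> P))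
       \<and> (\<exists>(V :: nat set) pa (A :: nat set) (B :: nat set) f \<alpha> P.
            setting V pa A B f \<alpha> P \<and> D1 V pa A B f \<alpha> P \<and> \<not> D2 V pa A B f P)
       \<and> (\<exists>(V :: nat set) pa (A :: nat set) (B :: nat set) f \<alpha> P.
            setting V pa A B f \<alpha> P \<and> D2 V pa A B f P \<and> \<not> D3 V pa A B f P)"
proof (intro conjI)
  show "\<forall>(V :: 'v set) pa (A :: 'a set) (B :: 'b set) f \<alpha> P.
            setting V pa A B f \<alpha> P \<longrightarrow>
              (D3 V pa A B f P \<longrightarrow> D2 V pa A B f P) \<and> (D2 V pa A B f P \<longrightarrow> D1 V pa A B f \<alpha> P)"
  proof (intro allI impI conjI)
    fix V :: "'v set" and pa and A :: "'a set" and B :: "'b set" and f \<alpha> P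
    assume s: "setting V pa A B f \<alpha> P"
    show "D3 V pa A B f P \<Longrightarrow> D2 V pa A B f P" unfolding D3_def by (elim conjE)
    assume d: "D2 V pa A B f P"
    have "init_dist V pa A \<alpha>" using s unfolding setting_def is_BN_def by (elim conjE)
    then show "D1 V pa A B f \<alpha> P" using d unfolding D1_def D2_def by (elim allE impE)
  qed
  show "\<exists>(V :: nat set) pa (A :: nat set) (B :: nat set) f \<alpha> P.
            setting V pa A B f \<alpha> P \<and> D1 V pa A B f \<alpha> P \<and> \<not> D2 V pa A B f P"
    using settingA D1A notD2A by blast
  show "\<exists>(V :: nat set) pa (A :: nat set) (B :: nat set) f \<alpha> P.
            setting V pa A B f \<alpha> P \<and> D2 V pa A B f P \<and> \<not> D3 V pa A B f P"
    using settingB D2B notD3B by blast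
qed

end
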